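(* Consider an ontological model with a finite set of ontic states $\Lambda=\{\lambda_1,\lambda_2,\dots\}$ reproducing the statistics of preparations $P_1,\dots,P_n$ and a set of binary measurements. Associate to each preparation the vector $\vec\mu_i=(\mu(\lambda_1|P_i),\mu(\lambda_2|P_i),\dots)$, and let $k$ be the affine dimension of $\{\vec\mu_i\}_{i=1}^n$. If the model is preparation noncontextual, then any tomographically complete set of (binary) measurements contains at least $k$ measurements.
   Context: Prepare-and-measure scenario: preparations $P_i$ and binary measurements $M$ (outcomes $\{0,1\}$) with empirical probabilities $P^e(k|P,M)$. A mixture is a probability distribution $Q$ on preparations. Two mixtures $Q,Q'$ are operationally equivalent with respect to a set of measurements $\mathcal M$ if $\sum_i Q(P_i)P^e(k|P_i,M)=\sum_i Q'(P_i)P^e(k|P_i,M)$ for all $M\in\mathcal M$ and $k$. A set $\mathcal M_C$ is tomographically complete if the statistics of every measurement are linear functions of the statistics of the measurements in $\mathcal M_C$ (the same functions for all preparations); operational equivalence is judged with respect to a tomographically complete set. An ontological model consists of ontic states $\Lambda$, distributions $\mu(\lambda|P)$ and response functions $P^t(k|\lambda,M)$ with $P^e(k|P,M)=\sum_\lambda\mu(\lambda|P)P^t(k|\lambda,M)$. It is preparation noncontextual if operationally equivalent mixtures $Q,Q'$ satisfy $\sum_i Q(P_i)\mu(\lambda|P_i)=\sum_i Q'(P_i)\mu(\lambda|P_i)$ for all $\lambda$. *)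

theory Defs
  imports "HOL-Analysis.Analysis"
begin

text \<open>Preparations are indexed by 0..<n; ontic states form a finite type 'l;
  mu i is the vector (mu(lambda|P_i))_lambda; R M k l is the response function
  P^t(k|lambda,M) for outcome k in {0,1}.\<close>

definition ontological_model ::
  "nat \<Rightarrow> (nat \<Rightarrow> real^'l::finite) \<Rightarrow> ('m \<Rightarrow> nat \<Rightarrow> 'l \<Rightarrow> real) \<Rightarrow> 'm set \<Rightarrow> bool" where
  "ontological_model n mu R Meas \<longleftrightarrow>
     (\<forall>i<n. (\<forall>l. mu i $ l \<ge> 0) \<and> (\<Sum>l\<in>UNIV. mu i $ l) = 1) \<and>
     (\<forall>M\<in>Meas. \<forall>l. R M 0 l \<ge> 0 \<and> R M 1 l \<ge> 0 \<and> R M 0 l + R M 1 l = 1)"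

definition pe :: "(nat \<Rightarrow> real^'l::finite) \<Rightarrow> ('m \<Rightarrow> nat \<Rightarrow> 'l \<Rightarrow> real) \<Rightarrow> nat \<Rightarrow> 'm \<Rightarrow> nat \<Rightarrow> real" where
  "pe mu R i M k = (\<Sum>l\<in>UNIV. mu i $ l * R M k l)"

definition mixture :: "nat \<Rightarrow> (nat \<Rightarrow> real) \<Rightarrow> bool" where
  "mixture n Q \<longleftrightarrow> (\<forall>i<n. Q i \<ge> 0) \<and> (\<Sum>i<n. Q i) = 1"

definition op_equiv ::
  "nat \<Rightarrow> 'm set \<Rightarrow> (nat \<Rightarrow> 'm \<Rightarrow> nat \<Rightarrow> real) \<Rightarrow> (nat \<Rightarrow> real) \<Rightarrow> (nat \<Rightarrow> real) \<Rightarrow> bool" where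
  "op_equiv n Ms stat Q Q' \<longleftrightarrow>
     (\<forall>M\<in>Ms. \<forall>k\<in>{0,1}. (\<Sum>i<n. Q i * stat i M k) = (\<Sum>i<n. Q' i * stat i M k))"

definition tomo_complete ::
  "nat \<Rightarrow> 'm set \<Rightarrow> (nat \<Rightarrow> 'm \<Rightarrow> nat \<Rightarrow> real) \<Rightarrow> 'm set \<Rightarrow> bool" where
  "tomo_complete n Meas stat MC \<longleftrightarrow> MC \<subseteq> Meas \<and>
     (\<forall>M\<in>Meas. \<forall>k\<in>{0,1}. \<exists>F c. finite F \<and> F \<subseteq> MC \<and>
        (\<forall>i<n. stat i M k = (\<Sum>M'\<in>F. \<Sum>k'\<in>{0,1}. c M' k' * stat i M' k')))"

text \<open>Preparation noncontextuality; operational equivalence is judged w.r.t. the whole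
  measurement set Meas (which is itself tomographically complete; all tomographically
  complete subsets induce the same equivalence).\<close>
definition prep_noncontextual ::
  "nat \<Rightarrow> (nat \<Rightarrow> real^'l::finite) \<Rightarrow> ('m \<Rightarrow> nat \<Rightarrow> 'l \<Rightarrow> real) \<Rightarrow> 'm set \<Rightarrow> bool" where
  "prep_noncontextual n mu R Meas \<longleftrightarrow>
     (\<forall>Q Q'. mixture n Q \<longrightarrow> mixture n Q' \<longrightarrow> op_equiv n Meas (pe mu R) Q Q' \<longrightarrow>
        (\<forall>l. (\<Sum>i<n. Q i * mu i $ l) = (\<Sum>i<n. Q' i * mu i $ l)))"

end

theory Submission
  imports Defs
begin

lemma pe0_inner:
  "pe mu R i M 0 = mu i \<bullet> (\<chi> l. R M 0 l)"
  by (simp add: pe_def inner_vec_def)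

lemma sum_pe0:
  "(\<Sum>i<n. c i * pe mu R i M 0) = (\<Sum>i<n. c i *\<^sub>R mu i) \<bullet> (\<chi> l. R M 0 l)"
  by (simp add: pe0_inner inner_sum_left)

lemma pe1:
  assumes "ontological_model n mu R Meas" "M \<in> Meas" "i < n"
  shows "pe mu R i M 1 = 1 - pe mu R i M 0"
proof -
  have "pe mu R i M 1 = (\<Sum>l\<in>UNIV. mu i $ l * (1 - R M 0 l))"
    unfolding pe_def
  proof (intro sum.cong refl)
    fix l
    have "\<forall>M\<in>Meas. \<forall>l. R M 0 l + R M 1 l = 1" using assms(1) unfolding ontological_model_def by blast
    then have "R M 0 l + R M 1 l = 1" using assms(2) by blast
    then have "R M 1 l = 1 - R M 0 l" by linarith
    then show "mu i $ l * R M 1 l = mu i $ l * (1 - R M 0 l)" by simp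
  qed
  also have "\<dots> = (\<Sum>l\<in>UNIV. mu i $ l) - pe mu R i M 0"
    by (simp add: pe_def algebra_simps sum_subtractf)
  also have "\<dots> = 1 - pe mu R i M 0" using assms unfolding ontological_model_def by auto
  finally show ?thesis .
qed

lemma keyA:
  fixes mu :: "nat \<Rightarrow> real^'l::finite"
  assumes om: "ontological_model n mu R Meas"
    and nc: "prep_noncontextual n mu R Meas"
    and tc: "tomo_complete n Meas (pe mu R) MC"
    and bs: "(\<Sum>i<n. b i) = 0"
    and orth: "\<forall>M\<in>MC. (\<Sum>i<n. b i *\<^sub>R mu i) \<bullet> (\<chi> l. R M 0 l) = 0"
  shows "(\<Sum>i<n. b i *\<^sub>R mu i) = 0"
proof -
  define p where "p i = max (b i) 0" for i
  define q where "q i = max (- b i) 0" for i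
  have bpq: "b i = p i - q i" for i by (simp add: p_def q_def)
  define s where "s = (\<Sum>i<n. p i)"
  have sq: "(\<Sum>i<n. q i) = s"
    using bs unfolding s_def bpq by (simp add: sum_subtractf)
  have pnn: "p i \<ge> 0" "q i \<ge> 0" for i by (auto simp: p_def q_def)
  have s0: "s \<ge> 0" unfolding s_def using pnn by (simp add: sum_nonneg)
  show ?thesis
  proof (cases "s = 0")
    case True
    then have "\<forall>i\<in>{..<n}. p i = 0" "\<forall>i\<in>{..<n}. q i = 0"
      using sq unfolding s_def by (simp_all add: sum_nonneg_eq_0_iff pnn)
    then have "\<forall>i\<in>{..<n}. b i = 0" using bpq by auto
    then show ?thesis by simp
  next
    case False
    with s0 have spos: "s > 0" by simp
    define Q where "Q i = p i / s" for i
    define Q' where "Q' i = q i / s" for i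
    have mQ: "mixture n Q" unfolding mixture_def Q_def
      using spos pnn by (simp add: sum_divide_distrib[symmetric] s_def)
    have mQ': "mixture n Q'" unfolding mixture_def Q'_def
      using spos pnn sq by (simp add: sum_divide_distrib[symmetric])
    have wdiff: "(\<Sum>i<n. Q i *\<^sub>R mu i) - (\<Sum>i<n. Q' i *\<^sub>R mu i) = (1/s) *\<^sub>R (\<Sum>i<n. b i *\<^sub>R mu i)"
      by (simp add: Q_def Q'_def bpq scaleR_sum_right sum_subtractf[symmetric] algebra_simps)
    have H0: "(\<Sum>i<n. Q i * pe mu R i M 0) = (\<Sum>i<n. Q' i * pe mu R i M 0)" if "M \<in> MC" for M
    proof -
      have "(\<Sum>i<n. Q i * pe mu R i M 0) - (\<Sum>i<n. Q' i * pe mu R i M 0)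
          = ((\<Sum>i<n. Q i *\<^sub>R mu i) - (\<Sum>i<n. Q' i *\<^sub>R mu i)) \<bullet> (\<chi> l. R M 0 l)"
        by (simp add: sum_pe0 inner_diff_left)
      also have "\<dots> = 0" using orth that by (simp add: wdiff)
      finally show ?thesis by simp
    qed
    have MCM: "MC \<subseteq> Meas" using tc unfolding tomo_complete_def by auto
    have H1: "(\<Sum>i<n. Q i * pe mu R i M 1) = (\<Sum>i<n. Q' i * pe mu R i M 1)" if "M \<in> MC" for M
    proof -
      have e: "(\<Sum>i<n. X i * pe mu R i M 1) = (\<Sum>i<n. X i) - (\<Sum>i<n. X i * pe mu R i M 0)" for X
      proof -
        have "(\<Sum>i<n. X i * pe mu R i M 1) = (\<Sum>i<n. X i - X i * pe mu R i M 0)"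
          using pe1[OF om] that MCM by (intro sum.cong refl) (simp add: right_diff_distrib subsetD)
        then show ?thesis by (simp add: sum_subtractf)
      qed
      show ?thesis using H0[OF that] mQ mQ' unfolding e mixture_def by simp
    qed
    have Hk: "\<forall>M'\<in>MC. \<forall>k'\<in>{0,1}. (\<Sum>i<n. Q i * pe mu R i M' k') = (\<Sum>i<n. Q' i * pe mu R i M' k')"
      using H0 H1 by auto
    have oe: "op_equiv n Meas (pe mu R) Q Q'"
      unfolding op_equiv_def
    proof (intro ballI)
      fix M k assume M: "M \<in> Meas" and k: "k \<in> {0::nat,1}"
      have "\<forall>M\<in>Meas. \<forall>k\<in>{0,1}. \<exists>F c. finite F \<and> F \<subseteq> MC \<and>
        (\<forall>i<n. pe mu R i M k = (\<Sum>M'\<in>F. \<Sum>k'\<in>{0,1}. c M' k' * pe mu R i M' k'))"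
        using tc unfolding tomo_complete_def by (rule conjunct2)
      then have "\<exists>F c. finite F \<and> F \<subseteq> MC \<and>
        (\<forall>i<n. pe mu R i M k = (\<Sum>M'\<in>F. \<Sum>k'\<in>{0,1}. c M' k' * pe mu R i M' k'))"
        using M k by (elim ballE) auto
      then obtain F c where F: "finite F" "F \<subseteq> MC"
        and ex: "\<forall>i<n. pe mu R i M k = (\<Sum>M'\<in>F. \<Sum>k'\<in>{0,1}. c M' k' * pe mu R i M' k')"
        by auto
      have gen: "(\<Sum>i<n. X i * pe mu R i M k) = (\<Sum>M'\<in>F. \<Sum>k'\<in>{0,1}. c M' k' * (\<Sum>i<n. X i * pe mu R i M' k'))" for X
      proof -
        have "(\<Sum>i<n. X i * pe mu R i M k) = (\<Sum>i<n. \<Sum>M'\<in>F. \<Sum>k'\<in>{0,1}. c M' k' * (X i * pe mu R i M' k'))"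
        proof (intro sum.cong refl)
          fix i assume "i \<in> {..<n}"
          then have "X i * pe mu R i M k = X i * (\<Sum>M'\<in>F. \<Sum>k'\<in>{0,1}. c M' k' * pe mu R i M' k')"
            using ex by simp
          also have "\<dots> = (\<Sum>M'\<in>F. \<Sum>k'\<in>{0,1}. X i * (c M' k' * pe mu R i M' k'))"
            by (simp only: sum_distrib_left)
          finally show "X i * pe mu R i M k = (\<Sum>M'\<in>F. \<Sum>k'\<in>{0,1}. c M' k' * (X i * pe mu R i M' k'))"
            by (simp only: mult.left_commute)
        qed
        also have "\<dots> = (\<Sum>M'\<in>F. \<Sum>i<n. \<Sum>k'\<in>{0,1}. c M' k' * (X i * pe mu R i M' k'))"
          by (rule sum.swap)
        also have "\<dots> = (\<Sum>M'\<in>F. \<Sum>k'\<in>{0,1}. \<Sum>i<n. c M' k' * (X i * pe mu R i M' k'))"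
          by (intro sum.cong refl sum.swap)
        also have "\<dots> = (\<Sum>M'\<in>F. \<Sum>k'\<in>{0,1}. c M' k' * (\<Sum>i<n. X i * pe mu R i M' k'))"
          by (simp only: sum_distrib_left)
        finally show ?thesis .
      qed
      show "(\<Sum>i<n. Q i * pe mu R i M k) = (\<Sum>i<n. Q' i * pe mu R i M k)"
        unfolding gen using Hk F(2)
        by (intro sum.cong refl) (metis (no_types, lifting) subsetD)
    qed
    have eq: "\<forall>l. (\<Sum>i<n. Q i * mu i $ l) = (\<Sum>i<n. Q' i * mu i $ l)"
      using nc mQ mQ' oe unfolding prep_noncontextual_def by blast
    have "(\<Sum>i<n. b i *\<^sub>R mu i) = s *\<^sub>R ((\<Sum>i<n. Q i *\<^sub>R mu i) - (\<Sum>i<n. Q' i *\<^sub>R mu i))"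
      using spos by (simp add: wdiff)
    also have "(\<Sum>i<n. Q i *\<^sub>R mu i) - (\<Sum>i<n. Q' i *\<^sub>R mu i) = 0"
      using eq by (simp add: vec_eq_iff sum_component)
    finally show ?thesis by simp
  qed
qed

theorem lemma3:
  fixes n :: nat
    and mu :: "nat \<Rightarrow> real^'l::finite"
    and R :: "'m \<Rightarrow> nat \<Rightarrow> 'l \<Rightarrow> real"
    and Meas MC :: "'m set"
  assumes "ontological_model n mu R Meas"
    and "prep_noncontextual n mu R Meas"
    and "tomo_complete n Meas (pe mu R) MC"
  shows "infinite MC \<or> aff_dim (mu ` {..<n}) \<le> int (card MC)"
proof (cases "finite MC \<and> n > 0")
  case False
  then show ?thesis by auto
next
  case True
  then have fin: "finite MC" and n0: "0 < n" by auto
  define r where "r M = (\<chi> l. R M 0 l)" for M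
  define T where "T = (\<lambda>x. x - mu 0) ` mu ` {..<n}"
  have ad: "aff_dim (mu ` {..<n}) = int (dim T)"
    unfolding T_def using n0 by (intro aff_dim_eq_dim_subtract) (auto intro: hull_inc)
  define f where "f v = (\<Sum>M\<in>MC. (v \<bullet> r M) *\<^sub>R r M)" for v :: "real^'l"
  have lf: "linear f"
    by (rule linearI) (simp_all add: f_def inner_add_left scaleR_add_left sum.distrib scaleR_sum_right)
  define S where "S = {x. \<exists>a. x = (\<Sum>i<n. a i *\<^sub>R (mu i - mu 0))}"
  have subS: "subspace S"
    unfolding subspace_def
  proof (intro conjI allI impI ballI)
    show "0 \<in> S" unfolding S_def
      by (auto intro!: exI[of _ "\<lambda>_. 0"])
  next
    fix x y assume "x \<in> S" "y \<in> S"
    then obtain a a' where "x = (\<Sum>i<n. a i *\<^sub>R (mu i - mu 0))" "y = (\<Sum>i<n. a' i *\<^sub>R (mu i - mu 0))"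
      unfolding S_def by auto
    then show "x + y \<in> S" unfolding S_def
      by (auto intro!: exI[of _ "\<lambda>i. a i + a' i"] simp: sum.distrib scaleR_add_left)
  next
    fix c :: real and x assume "x \<in> S"
    then obtain a where "x = (\<Sum>i<n. a i *\<^sub>R (mu i - mu 0))" unfolding S_def by auto
    then show "c *\<^sub>R x \<in> S" unfolding S_def
      by (auto intro!: exI[of _ "\<lambda>i. c * a i"] simp: scaleR_sum_right)
  qed
  have TS: "T \<subseteq> S"
  proof
    fix x assume "x \<in> T"
    then obtain j where j: "j < n" "x = mu j - mu 0" unfolding T_def by auto
    have "(\<Sum>i<n. (if i = j then 1 else 0) *\<^sub>R (mu i - mu 0)) = (\<Sum>i<n. if i = j then mu i - mu 0 else 0)"
      by (intro sum.cong) auto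
    also have "\<dots> = x" using j by simp
    finally have "x = (\<Sum>i<n. (if i = j then 1 else 0) *\<^sub>R (mu i - mu 0))" by simp
    then show "x \<in> S" unfolding S_def mem_Collect_eq
      by (intro exI[of _ "\<lambda>i. if i = j then 1 else 0"])
  qed
  have spanS: "span T \<subseteq> S" by (rule span_minimal[OF TS subS])
  have inj: "inj_on f (span T)"
    unfolding linear_injective_on_subspace_0[OF lf subspace_span]
  proof (intro ballI impI)
    fix x assume xT: "x \<in> span T" and fx: "f x = 0"
    obtain a where xa: "x = (\<Sum>i<n. a i *\<^sub>R (mu i - mu 0))" using xT spanS unfolding S_def by auto
    have "x \<bullet> f x = (\<Sum>M\<in>MC. (x \<bullet> r M)^2)"
      by (simp add: f_def inner_sum_right power2_eq_square)
    then have "(\<Sum>M\<in>MC. (x \<bullet> r M)^2) = 0" using fx by simp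
    then have orth: "\<forall>M\<in>MC. x \<bullet> r M = 0"
      using fin by (simp add: sum_nonneg_eq_0_iff)
    define b where "b i = a i - (if i = 0 then (\<Sum>j<n. a j) else 0)" for i
    have bs: "(\<Sum>i<n. b i) = 0"
      using n0 by (simp add: b_def sum_subtractf sum.delta cong: if_cong)
    have xb: "x = (\<Sum>i<n. b i *\<^sub>R mu i)"
    proof -
      have "(\<Sum>i<n. b i *\<^sub>R mu i) = (\<Sum>i<n. a i *\<^sub>R mu i) - (\<Sum>i<n. (if i = 0 then (\<Sum>j<n. a j) else 0) *\<^sub>R mu i)"
        by (simp add: b_def scaleR_diff_left sum_subtractf)
      also have "(\<Sum>i<n. (if i = 0 then (\<Sum>j<n. a j) else 0) *\<^sub>R mu i) = (\<Sum>j<n. a j) *\<^sub>R mu 0"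
      proof -
        have "(\<Sum>i<n. (if i = 0 then (\<Sum>j<n. a j) else 0) *\<^sub>R mu i) = (\<Sum>i<n. if i = 0 then (\<Sum>j<n. a j) *\<^sub>R mu i else 0)"
          by (intro sum.cong) auto
        also have "\<dots> = (\<Sum>j<n. a j) *\<^sub>R mu 0" using n0 by simp
        finally show ?thesis .
      qed
      finally show ?thesis
        by (simp add: xa scaleR_diff_right sum_subtractf scaleR_sum_left)
    qed
    show "x = 0"
      using keyA[OF assms bs] orth xb unfolding r_def by simp
  qed
  have "dim T = dim (f ` T)" using dim_image_eq[OF lf inj] by simp
  also have "\<dots> \<le> card (r ` MC)"
  proof (rule dim_le_card)
    show "f ` T \<subseteq> span (r ` MC)"
      unfolding f_def
      by (intro image_subsetI span_sum span_mul span_base imageI)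
    show "finite (r ` MC)" using fin by simp
  qed
  also have "\<dots> \<le> card MC" using fin by (rule card_image_le)
  finally show ?thesis using ad by simp
qed

end
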